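(* Let $X=(x_{ij})\in\mathbb{R}^{n\times p}$ with columns $X_1,\dots,X_p$, and let $A$ be a symmetric $n\times n$ $0/1$ matrix (the adjacency matrix of a network on the $n$ rows). For a $p\times p$ matrix $B=(\beta_{kj})$ with columns $\beta_j$, a diagonal matrix $\Omega=\mathrm{diag}(\omega_1^2,\dots,\omega_p^2)$ with $\omega_j>0$, and an $n\times n$ positive definite matrix $\Theta$, define $$S=\frac1p\sum_{j=1}^p\frac{1}{\omega_j^2}(X_j-X\beta_j)(X_j-X\beta_j)^\top,\qquad L(B,\Omega,\Theta\mid X)=-n\log\det D-p\log\det\Theta+\mathrm{Tr}(\Theta S),$$ where $D=\Omega^{-1}=\mathrm{diag}(1/\omega_1^2,\dots,1/\omega_p^2)$. For a DAG $G$ on nodes $\{1,\dots,p\}$, let $(\widehat B(G),\widehat\Omega(G),\widehat\Theta(G))$ denote a minimizer of $L(B,\Omega,\Theta\mid X)$ over all $B$ with $\beta_{kj}=0$ whenever $k\to j$ is not an edge of $G$, all such positive diagonal $\Omega$, and all positive definite $\Theta$ satisfying $\Theta_{ij}=0$ whenever $i\neq j$ and $A_{ij}=0$, and $\mathrm{diag}(\Theta^{-1})=1$ (the maximum likelihood estimate given $G$). Suppose $G_1$ and $G_2$ are two Markov equivalent DAGs on the same $p$ nodes and that the maximum likelihood estimates $(\widehat B(G_m),\widehat\Omega(G_m),\widehat\Theta(G_m))$, $m=1,2$, exist for $X$. Then $$L(\widehat B(G_1),\widehat\Omega(G_1),\widehat\Theta(G_1)\mid X)=L(\widehat B(G_2),\widehat\Omega(G_2),\widehat\Theta(G_2)\mid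 X).$$
   Context: This $L$ is the negative log-likelihood (as defined in the paper) of the model in which $X_j=\sum_{k}\beta_{kj}X_k+\varepsilon_j$ with independent $\varepsilon_j\sim\mathcal{N}_n(0,\omega_j^2\Sigma)$, $\Theta=\Sigma^{-1}$, $\mathrm{diag}(\Sigma)=1$. Two DAGs are Markov equivalent if they encode the same set of conditional independence relations (equivalently, they have the same skeleton and the same v-structures). *)

theory Defs
  imports "HOL-Analysis.Analysis"
begin

text \<open>Matrices are indexed by finite types: rows of the data matrix X by 'n
 (so n = CARD('n)), nodes / columns by 'p (so p = CARD('p)).
 For M :: real^'c^'r, M$i$j is the (i,j) entry.\<close>

definition pos_def :: "real^'n^'n \<Rightarrow> bool" where
  "pos_def M \<longleftrightarrow> transpose M = M \<and> (\<forall>x. x \<noteq> 0 \<longrightarrow> x \<bullet> (M *v x) > 0)"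

definition pos_diag :: "real^'p^'p \<Rightarrow> bool" where
  "pos_diag Om \<longleftrightarrow> (\<forall>i j. i \<noteq> j \<longrightarrow> Om$i$j = 0) \<and> (\<forall>j. Om$j$j > 0)"

definition S_mat :: "real^'p^'n \<Rightarrow> real^'p^'p \<Rightarrow> real^'p^'p \<Rightarrow> real^'n^'n" where
  "S_mat X B Om = (\<chi> a b. (1 / real CARD('p)) *
     (\<Sum>j\<in>UNIV. (1 / Om$j$j) *
        ((column j X - X *v column j B)$a) * ((column j X - X *v column j B)$b)))"

definition negloglik :: "real^'p^'n \<Rightarrow> real^'p^'p \<Rightarrow> real^'p^'p \<Rightarrow> real^'n^'n \<Rightarrow> real" where
  "negloglik X B Om Th =
     - real CARD('n) * ln (det (matrix_inv Om))
     - real CARD('p) * ln (det Th)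
     + trace (Th ** S_mat X B Om)"

definition is_dag :: "('p \<times> 'p) set \<Rightarrow> bool" where
  "is_dag E \<longleftrightarrow> acyclic E"

definition skeleton :: "('p \<times> 'p) set \<Rightarrow> ('p \<times> 'p) set" where
  "skeleton E = {(a,b). (a,b) \<in> E \<or> (b,a) \<in> E}"

definition v_structures :: "('p \<times> 'p) set \<Rightarrow> ('p \<times> 'p \<times> 'p) set" where
  "v_structures E = {(a,c,b). (a,c) \<in> E \<and> (b,c) \<in> E \<and> a \<noteq> b \<and> (a,b) \<notin> E \<and> (b,a) \<notin> E}"

definition markov_equiv :: "('p \<times> 'p) set \<Rightarrow> ('p \<times> 'p) set \<Rightarrow> bool" where
  "markov_equiv E1 E2 \<longleftrightarrow> skeleton E1 = skeleton E2 \<and> v_structures E1 = v_structures E2"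

definition feasible :: "real^'n^'n \<Rightarrow> ('p \<times> 'p) set \<Rightarrow> real^'p^'p \<Rightarrow> real^'p^'p \<Rightarrow> real^'n^'n \<Rightarrow> bool" where
  "feasible A E B Om Th \<longleftrightarrow>
     (\<forall>k j. (k,j) \<notin> E \<longrightarrow> B$k$j = 0) \<and>
     pos_diag Om \<and>
     pos_def Th \<and>
     (\<forall>i j. i \<noteq> j \<and> A$i$j = 0 \<longrightarrow> Th$i$j = 0) \<and>
     (\<forall>i. (matrix_inv Th)$i$i = 1)"

definition is_mle :: "real^'p^'n \<Rightarrow> real^'n^'n \<Rightarrow> ('p \<times> 'p) set \<Rightarrow> real^'p^'p \<Rightarrow> real^'p^'p \<Rightarrow> real^'n^'n \<Rightarrow> bool" where
  "is_mle X A E B Om Th \<longleftrightarrow> feasible A E B Om Th \<and>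
     (\<forall>B' Om' Th'. feasible A E B' Om' Th' \<longrightarrow> negloglik X B Om Th \<le> negloglik X B' Om' Th')"

end

theory Submission
  imports Defs
begin


lemma det_inv_diag:
  fixes Om :: "real^'p^'p"
  assumes "pos_diag Om"
  shows "det (matrix_inv Om) = 1 / (\<Prod>j\<in>UNIV. Om$j$j)"
proof -
  have d: "det Om = (\<Prod>j\<in>UNIV. Om$j$j)"
    using assms unfolding pos_diag_def by (intro det_diagonal) auto
  have nz: "(\<Prod>j\<in>UNIV. Om$j$j) \<noteq> 0" using assms unfolding pos_diag_def
    by (simp add: less_imp_neq[symmetric] prod_zero_iff)
  hence inv: "invertible Om" using d invertible_det_nz by metis
  hence "Om ** matrix_inv Om = mat 1"
    unfolding matrix_inv_def invertible_def by (rule someI_ex[where P="\<lambda>A'. Om ** A' = mat 1 \<and> A' ** Om = mat 1", THEN conjunct1])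
  hence "det Om * det (matrix_inv Om) = 1" by (metis det_mul det_I)
  thus ?thesis using d nz by (simp add: field_simps)
qed

definition resid :: "real^'p^'n \<Rightarrow> real^'p^'p \<Rightarrow> 'p \<Rightarrow> real^'n" where
  "resid X B j = column j X - X *v column j B"

definition qf :: "real^'n^'n \<Rightarrow> real^'n \<Rightarrow> real" where
  "qf Th v = v \<bullet> (Th *v v)"

lemma trace_S:
  fixes X :: "real^'p^'n" and B Om :: "real^'p^'p" and Th :: "real^'n^'n"
  shows
  "trace (Th ** S_mat X B Om) = (1 / real CARD('p)) * (\<Sum>j\<in>UNIV. (1 / Om$j$j) * qf Th (resid X B j))"
proof -
  have "trace (Th ** S_mat X B Om) = (\<Sum>i\<in>UNIV. \<Sum>k\<in>UNIV. \<Sum>j\<in>UNIV. (1 / real CARD('p)) * ((1 / Om$j$j) * ((resid X B j)$i * (Th$i$k * (resid X B j)$k))))"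
    unfolding trace_def matrix_matrix_mult_def S_mat_def resid_def
    by (simp add: sum_distrib_left sum_distrib_right mult_ac)
  also have "\<dots> = (\<Sum>j\<in>UNIV. \<Sum>i\<in>UNIV. \<Sum>k\<in>UNIV. (1 / real CARD('p)) * ((1 / Om$j$j) * ((resid X B j)$i * (Th$i$k * (resid X B j)$k))))"
    apply (subst sum.swap) by (rule sum.swap)
  also have "\<dots> = (1 / real CARD('p)) * (\<Sum>j\<in>UNIV. (1 / Om$j$j) * qf Th (resid X B j))"
    unfolding qf_def inner_vec_def matrix_vector_mult_def
    by (simp add: sum_distrib_left)
  finally show ?thesis .
qed

lemma qf_lin:
  "qf Th (a *\<^sub>R u + b *\<^sub>R w) = a^2 * qf Th u + a * b * (u \<bullet> (Th *v w) + w \<bullet> (Th *v u)) + b^2 * qf Th w"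
  unfolding qf_def
  by (simp add: algebra_simps inner_add_left inner_add_right power2_eq_square)

lemma sum_upd:
  fixes f g :: "'a::finite \<Rightarrow> real"
  shows "(\<Sum>k\<in>UNIV. f k * (if k = x then a else g k)) = (\<Sum>k\<in>UNIV. f k * g k) - f x * g x + f x * a"
proof -
  have "(\<Sum>k\<in>UNIV. f k * (if k = x then a else g k)) = f x * a + (\<Sum>k\<in>UNIV-{x}. f k * g k)"
    by (subst sum.remove[of UNIV x]) auto
  moreover have "(\<Sum>k\<in>UNIV. f k * g k) = f x * g x + (\<Sum>k\<in>UNIV-{x}. f k * g k)"
    by (subst sum.remove[of UNIV x]) auto
  ultimately show ?thesis by simp
qed

lemma sum_two:
  fixes f :: "'a::finite \<Rightarrow> real"
  assumes "x \<noteq> y"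
  shows "(\<Sum>k\<in>UNIV. f k) = f x + f y + (\<Sum>k\<in>UNIV-{x,y}. f k)"
proof -
  have "(\<Sum>k\<in>UNIV. f k) = f x + (\<Sum>k\<in>UNIV-{x}. f k)" by (subst sum.remove[of UNIV x]) auto
  moreover have "(\<Sum>k\<in>UNIV-{x}. f k) = f y + (\<Sum>k\<in>UNIV-{x}-{y}. f k)"
    using assms by (subst sum.remove[of "UNIV-{x}" y]) auto
  moreover have "UNIV-{x}-{y} = UNIV-{x,y}" by auto
  ultimately show ?thesis by simp
qed

lemma prod_two:
  fixes f :: "'a::finite \<Rightarrow> real"
  assumes "x \<noteq> y"
  shows "(\<Prod>k\<in>UNIV. f k) = f x * f y * (\<Prod>k\<in>UNIV-{x,y}. f k)"
proof -
  have "(\<Prod>k\<in>UNIV. f k) = f x * (\<Prod>k\<in>UNIV-{x}. f k)" by (subst prod.remove[of UNIV x]) auto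
  moreover have "(\<Prod>k\<in>UNIV-{x}. f k) = f y * (\<Prod>k\<in>UNIV-{x}-{y}. f k)"
    using assms by (subst prod.remove[of "UNIV-{x}" y]) auto
  moreover have "UNIV-{x}-{y} = UNIV-{x,y}" by auto
  ultimately show ?thesis by simp
qed

lemma alg:
  fixes ux uy V c c' A M C :: real
  assumes "ux > 0" "uy > 0" "V = uy + c^2*ux" "c' = c*ux/V"
  shows "(1/(ux*uy/V))*((1-c'*c)^2*A + (1-c'*c)*(-c')*M + (-c')^2*C) + (1/V)*(c^2*A + c*1*M + 1^2*C)
     = (1/ux)*A + (1/uy)*C"
proof -
  have V: "V > 0" using assms by (simp add: add_pos_nonneg)
  have e1: "1 - c'*c = uy/V" using V assms by (simp add: field_simps power2_eq_square)
  have e2: "1/(ux*uy/V) = V/(ux*uy)" by simp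
  have "(V/(ux*uy))*((uy/V)^2*A + (uy/V)*(-c')*M + (-c')^2*C) + (1/V)*(c^2*A + c*1*M + 1^2*C)
     = (1/ux)*A + (1/uy)*C"
    unfolding assms(4) using V assms(1,2) assms(3)[symmetric]
    apply (simp add: field_simps power2_eq_square)
    apply hypsubst
    by (simp add: algebra_simps)
  then show ?thesis unfolding e1 e2 .
qed

lemma negloglik_alt:
  fixes X :: "real^'p^'n" and B Om :: "real^'p^'p" and Th :: "real^'n^'n"
  assumes "pos_diag Om"
  shows "negloglik X B Om Th = - real CARD('n) * ln (1 / (\<Prod>j\<in>UNIV. Om$j$j)) - real CARD('p) * ln (det Th)
     + (1 / real CARD('p)) * (\<Sum>j\<in>UNIV. (1 / Om$j$j) * qf Th (resid X B j))"
  unfolding negloglik_def trace_S det_inv_diag[OF assms] ..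

lemma reverse_covered:
  fixes X :: "real^'p^'n" and B Om :: "real^'p^'p" and Th :: "real^'n^'n"
  assumes acyc: "acyclic G" and xy: "(x,y) \<in> G"
    and cov1: "\<forall>z. (z,x) \<in> G \<longrightarrow> (z,y) \<in> G"
    and cov2: "\<forall>z. (z,y) \<in> G \<and> z \<noteq> x \<longrightarrow> (z,x) \<in> G"
    and supp: "\<forall>k j. (k,j) \<notin> G \<longrightarrow> B$k$j = 0" and pd: "pos_diag Om"
  shows "\<exists>B' Om'. (\<forall>k j. (k,j) \<notin> (G - {(x,y)}) \<union> {(y,x)} \<longrightarrow> B'$k$j = 0)
      \<and> pos_diag Om' \<and> negloglik X B' Om' Th = negloglik X B Om Th"
proof -
  have nocyc: "(a,a) \<notin> G" for a using acyc unfolding acyclic_def by blast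
  have nocyc2: "(a,b) \<in> G \<Longrightarrow> (b,a) \<notin> G" for a b using acyc unfolding acyclic_def
    by (meson trancl.r_into_trancl trancl_into_trancl)
  have xny: "x \<noteq> y" using xy nocyc by blast
  have Bxx: "B$x$x = 0" "B$y$y = 0" "B$y$x = 0" using supp nocyc nocyc2[OF xy] by auto
  define c where "c = B$x$y"
  define ux where "ux = Om$x$x"
  define uy where "uy = Om$y$y"
  define V where "V = uy + c^2 * ux"
  define c' where "c' = c * ux / V"
  have ux: "ux > 0" and uy: "uy > 0" using pd unfolding pos_diag_def ux_def uy_def by auto
  have V: "V > 0" unfolding V_def using ux uy by (simp add: add_pos_nonneg)
  define By where "By = (\<lambda>k. if k = x then 0 else B$k$y + c * B$k$x)"
  define B' where "B' = (\<chi> k. \<chi> j. if j = y then By k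
      else if j = x then (if k = y then c' else B$k$x - c' * By k) else B$k$j)"
  define Om' where "Om' = (\<chi> i. \<chi> j. if i = j then (if i = y then V else if i = x then ux * uy / V else Om$i$i) else (0::real))"
  have pd': "pos_diag Om'"
    using pd ux uy V unfolding pos_diag_def Om'_def by auto
  have sp: "B$k$j \<noteq> 0 \<Longrightarrow> (k,j) \<in> G" for k j using supp by blast
  have supp': "\<forall>k j. (k,j) \<notin> (G - {(x,y)}) \<union> {(y,x)} \<longrightarrow> B'$k$j = 0"
  proof (intro allI impI)
    fix k j assume kj: "(k,j) \<notin> (G - {(x,y)}) \<union> {(y,x)}"
    show "B'$k$j = 0"
    proof (cases "j = y")
      case True
      show ?thesis
      proof (cases "k = x")
        case True then show ?thesis using \<open>j = y\<close> by (simp add: B'_def By_def)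
      next
        case False
        hence "(k,y) \<notin> G" using kj \<open>j = y\<close> by blast
        hence "B$k$y = 0" "B$k$x = 0" using sp cov1 by blast+
        then show ?thesis using \<open>j = y\<close> False by (simp add: B'_def By_def)
      qed
    next
      case False
      show ?thesis
      proof (cases "j = x")
        case True
        have "k \<noteq> y" using kj True by blast
        have kx: "(k,x) \<notin> G" using kj True xny by blast
        hence "B$k$x = 0" using sp by blast
        moreover have "By k = 0"
        proof (cases "k = x")
          case True then show ?thesis by (simp add: By_def)
        next
          case False
          hence "(k,y) \<notin> G" using cov2 kx by blast
          hence "B$k$y = 0" using sp by blast
          then show ?thesis using \<open>B$k$x = 0\<close> False by (simp add: By_def)
        qed
        ultimately show ?thesis using True \<open>k \<noteq> y\<close> xny by (simp add: B'_def)
      next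
        case False
        hence "(k,j) \<notin> G" using kj \<open>j \<noteq> y\<close> by blast
        then show ?thesis using sp False \<open>j \<noteq> y\<close> by (simp add: B'_def) blast
      qed
    qed
  qed
  have ry: "resid X B' y = c *\<^sub>R resid X B x + 1 *\<^sub>R resid X B y"
    unfolding resid_def
    apply (simp add: vec_eq_iff matrix_vector_mult_def column_def B'_def By_def sum_upd xny)
    apply (simp add: c_def Bxx algebra_simps sum.distrib sum_distrib_left)
    done
  have rx: "resid X B' x = (1 - c' * c) *\<^sub>R resid X B x + (- c') *\<^sub>R resid X B y"
  proof -
    have "resid X B' x = resid X B x - c' *\<^sub>R resid X B' y"
      unfolding resid_def
      apply (simp add: vec_eq_iff matrix_vector_mult_def column_def B'_def sum_upd xny)
      apply (simp add: By_def Bxx algebra_simps sum.distrib sum_distrib_left sum_subtractf)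
      done
    then show ?thesis unfolding ry by (simp add: algebra_simps)
  qed
  have rj: "resid X B' j = resid X B j" if "j \<noteq> x" "j \<noteq> y" for j
    using that unfolding resid_def by (simp add: vec_eq_iff matrix_vector_mult_def column_def B'_def)
  have Omx: "Om'$x$x = ux * uy / V" and Omy: "Om'$y$y = V" using xny by (simp_all add: Om'_def)
  have prod: "(\<Prod>j\<in>UNIV. Om'$j$j) = (\<Prod>j\<in>UNIV. Om$j$j)"
  proof -
    have "(\<Prod>j\<in>UNIV-{x,y}. Om'$j$j) = (\<Prod>j\<in>UNIV-{x,y}. Om$j$j)"
      by (rule prod.cong) (auto simp: Om'_def)
    then show ?thesis using V unfolding prod_two[OF xny, of "\<lambda>j. Om'$j$j"] prod_two[OF xny, of "\<lambda>j. Om$j$j"] Omx Omy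
      by (simp add: ux_def uy_def)
  qed
  have key: "(1 / Om'$x$x) * qf Th (resid X B' x) + (1 / Om'$y$y) * qf Th (resid X B' y)
     = (1 / Om$x$x) * qf Th (resid X B x) + (1 / Om$y$y) * qf Th (resid X B y)"
    unfolding rx ry qf_lin Omx Omy ux_def[symmetric] uy_def[symmetric]
    by (rule alg[OF ux uy V_def c'_def])
  have sums: "(\<Sum>j\<in>UNIV. (1 / Om'$j$j) * qf Th (resid X B' j)) = (\<Sum>j\<in>UNIV. (1 / Om$j$j) * qf Th (resid X B j))"
    apply (subst sum_two[OF xny])+
    using key rj by (simp add: Om'_def)
  have "negloglik X B' Om' Th = negloglik X B Om Th"
    unfolding negloglik_alt[OF pd] negloglik_alt[OF pd'] prod sums ..
  thus ?thesis using supp' pd' by blast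
qed



lemma acyc_facts:
  assumes "acyclic G"
  shows "(a,a) \<notin> G" "(a,b) \<in> G \<Longrightarrow> (b,a) \<notin> G"
    "(a,b) \<in> G \<Longrightarrow> (b,c) \<in> G \<Longrightarrow> (c,a) \<notin> G"
  using assms unfolding acyclic_def
  by (meson trancl.r_into_trancl trancl_into_trancl)+

lemma find_covered:
  fixes G G' :: "('p::finite \<times> 'p) set"
  assumes ac: "acyclic G" and ac': "acyclic G'" and sk: "skeleton G = skeleton G'"
    and vs: "v_structures G = v_structures G'" and ne: "G - G' \<noteq> {}"
  shows "\<exists>x y. (x,y) \<in> G \<and> (x,y) \<notin> G' \<and> (\<forall>z. (z,x) \<in> G \<longrightarrow> (z,y) \<in> G)
           \<and> (\<forall>z. (z,y) \<in> G \<and> z \<noteq> x \<longrightarrow> (z,x) \<in> G)"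
proof -
  have adj: "((a,b) \<in> G \<or> (b,a) \<in> G) \<longleftrightarrow> ((a,b) \<in> G' \<or> (b,a) \<in> G')" for a b
    using sk unfolding skeleton_def by (auto simp: set_eq_iff)
  have vsi: "(a,c,b) \<in> v_structures G \<longleftrightarrow> (a,c,b) \<in> v_structures G'" for a b c
    using vs by simp
  have acT: "acyclic (G\<^sup>+)" using ac unfolding acyclic_def by simp
  have wf1: "wf (G\<^sup>+)" by (rule finite_acyclic_wf[OF _ acT]) simp
  have wf2: "wf ((G\<^sup>+)\<inverse>)" by (rule finite_acyclic_wf_converse[OF _ acT]) simp
  define Q where "Q = {y. \<exists>x. (x,y) \<in> G - G'}"
  obtain y0 where "y0 \<in> Q" using ne unfolding Q_def by auto
  then obtain y where yQ: "y \<in> Q" and ymin: "\<And>y'. (y',y) \<in> G\<^sup>+ \<Longrightarrow> y' \<notin> Q"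
    using wf1 unfolding wf_eq_minimal by metis
  define Q' where "Q' = {x. (x,y) \<in> G - G'}"
  obtain x0 where "x0 \<in> Q'" using yQ unfolding Q_def Q'_def by auto
  then obtain x where xQ: "x \<in> Q'" and xmax: "\<And>z. (z,x) \<in> (G\<^sup>+)\<inverse> \<Longrightarrow> z \<notin> Q'"
    using wf2 unfolding wf_eq_minimal by metis
  have xy: "(x,y) \<in> G" "(x,y) \<notin> G'" using xQ unfolding Q'_def by auto
  have yx': "(y,x) \<in> G'" using adj[of x y] xy by blast
  have noQ: "(w,v) \<in> G \<Longrightarrow> (v,y) \<in> G\<^sup>+ \<Longrightarrow> (w,v) \<in> G'" for w v
    using ymin[of v] unfolding Q_def by blast
  have c1: "(z,y) \<in> G" if zx: "(z,x) \<in> G" for z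
  proof (rule ccontr)
    assume nzy: "(z,y) \<notin> G"
    have "(y,z) \<notin> G" using acyc_facts(3)[OF ac zx xy(1)] .
    have "z \<noteq> y" using zx acyc_facts(2)[OF ac xy(1)] by blast
    have zx': "(z,x) \<in> G'" using noQ[OF zx] xy(1) by blast
    have "(z,x,y) \<in> v_structures G'"
      unfolding v_structures_def using zx' yx' \<open>z \<noteq> y\<close> adj[of z y] nzy \<open>(y,z) \<notin> G\<close> by auto
    hence "(y,x) \<in> G" using vsi unfolding v_structures_def by auto
    thus False using acyc_facts(2)[OF ac xy(1)] by blast
  qed
  have c2: "(z,x) \<in> G" if zy: "(z,y) \<in> G" and zx: "z \<noteq> x" for z
  proof (rule ccontr)
    assume nzx: "(z,x) \<notin> G"
    show False
    proof (cases "(x,z) \<in> G")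
      case False
      have "(x,y,z) \<in> v_structures G"
        unfolding v_structures_def using xy(1) zy zx nzx False by auto
      hence "(x,y,z) \<in> v_structures G'" using vsi by blast
      thus False using xy(2) unfolding v_structures_def by auto
    next
      case True
      have "(z,y) \<in> G'"
      proof (rule ccontr)
        assume "(z,y) \<notin> G'"
        hence "z \<in> Q'" using zy unfolding Q'_def by auto
        thus False using xmax[of z] True by auto
      qed
      moreover have "(x,z) \<in> G'" using noQ[OF True] zy by blast
      ultimately show False using acyc_facts(3)[OF ac'] yx' by blast
    qed
  qed
  show ?thesis using xy c1 c2 by blast
qed

lemma reversal_acyclic:
  assumes ac: "acyclic G" and xy: "(x,y) \<in> G"
    and cov2: "\<forall>z. (z,y) \<in> G \<and> z \<noteq> x \<longrightarrow> (z,x) \<in> G"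
  shows "acyclic ((G - {(x,y)}) \<union> {(y,x)})"
proof -
  define G0 where "G0 = G - {(x,y)}"
  have xny: "x \<noteq> y" using acyc_facts(1)[OF ac] xy by blast
  have sub: "(a,b) \<in> G0\<^sup>+ \<Longrightarrow> (a,b) \<in> G\<^sup>+" for a b
    using trancl_mono[of "(a,b)" G0 G] unfolding G0_def by blast
  have noc: "(a,a) \<notin> G0\<^sup>+" for a using sub ac unfolding acyclic_def by blast
  have K: "(a,x) \<in> G0\<^sup>+" if "(a,y) \<in> G0\<^sup>+" for a
    using that
  proof (cases rule: tranclE)
    case base
    then show ?thesis using cov2 unfolding G0_def by blast
  next
    case (step z)
    hence "(z,x) \<in> G0" using cov2 xny unfolding G0_def by blast
    then show ?thesis using step(1) by (meson trancl_into_trancl)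
  qed
  have inv: "(a,b) \<in> (G0 \<union> {(y,x)})\<^sup>+ \<Longrightarrow> (a,b) \<in> G0\<^sup>+ \<or> (a = y \<and> (b = x \<or> (x,b) \<in> G0\<^sup>+))" for a b
  proof (induction rule: trancl_induct)
    case (base b)
    then show ?case by blast
  next
    case (step b c)
    from step(2) show ?case
    proof
      assume bc: "(b,c) \<in> G0"
      from step(3) show ?case
      proof (elim disjE conjE)
        assume "(a,b) \<in> G0\<^sup>+" thus ?case using bc by (meson trancl_into_trancl)
      next
        assume "a = y" "b = x" thus ?case using bc by blast
      next
        assume "a = y" "(x,b) \<in> G0\<^sup>+" thus ?case using bc by (meson trancl_into_trancl)
      qed
    next
      assume "(b,c) \<in> {(y,x)}"
      hence bc: "b = y" "c = x" by auto
      from step(3) show ?case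
      proof (elim disjE conjE)
        assume "(a,b) \<in> G0\<^sup>+" thus ?case using bc K by blast
      next
        assume "a = y" "b = x" thus ?case using bc xny by blast
      next
        assume "a = y" "(x,b) \<in> G0\<^sup>+" thus ?case using bc K noc by blast
      qed
    qed
  qed
  show ?thesis unfolding acyclic_def G0_def[symmetric]
  proof (intro allI notI)
    fix a assume "(a,a) \<in> (G0 \<union> {(y,x)})\<^sup>+"
    from inv[OF this] show False using noc K xny by blast
  qed
qed

lemma reversal_equiv:
  assumes ac: "acyclic G" and xy: "(x,y) \<in> G"
    and cov1: "\<forall>z. (z,x) \<in> G \<longrightarrow> (z,y) \<in> G"
    and cov2: "\<forall>z. (z,y) \<in> G \<and> z \<noteq> x \<longrightarrow> (z,x) \<in> G"
  shows "skeleton ((G - {(x,y)}) \<union> {(y,x)}) = skeleton G"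
    and "v_structures ((G - {(x,y)}) \<union> {(y,x)}) = v_structures G"
proof -
  show "skeleton ((G - {(x,y)}) \<union> {(y,x)}) = skeleton G"
    unfolding skeleton_def using xy by auto
  have xny: "x \<noteq> y" using acyc_facts(1)[OF ac] xy by blast
  have yx: "(y,x) \<notin> G" using acyc_facts(2)[OF ac xy] .
  show "v_structures ((G - {(x,y)}) \<union> {(y,x)}) = v_structures G"
    unfolding v_structures_def using xy yx xny cov1 cov2 by auto
qed

lemma transfer:
  fixes X :: "real^'p^'n" and Th :: "real^'n^'n" and G G' :: "('p \<times> 'p) set"
  assumes "acyclic G" "acyclic G'" "skeleton G = skeleton G'" "v_structures G = v_structures G'"
    "\<forall>k j. (k,j) \<notin> G \<longrightarrow> B$k$j = 0" "pos_diag Om"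
  shows "\<exists>B' Om'. (\<forall>k j. (k,j) \<notin> G' \<longrightarrow> B'$k$j = 0) \<and> pos_diag Om' \<and>
           negloglik X B' Om' Th = negloglik X B Om Th"
  using assms
proof (induction "card (G - G')" arbitrary: G B Om rule: less_induct)
  case less
  show ?case
  proof (cases "G - G' = {}")
    case True
    then show ?thesis using less.prems by blast
  next
    case False
    obtain x y where xy: "(x,y) \<in> G" "(x,y) \<notin> G'"
      and cov1: "\<forall>z. (z,x) \<in> G \<longrightarrow> (z,y) \<in> G" and cov2: "\<forall>z. (z,y) \<in> G \<and> z \<noteq> x \<longrightarrow> (z,x) \<in> G"
      using find_covered[OF less.prems(1-4) False] by blast
    define G2 where "G2 = (G - {(x,y)}) \<union> {(y,x)}"
    obtain B2 Om2 where B2: "\<forall>k j. (k,j) \<notin> G2 \<longrightarrow> B2$k$j = 0" "pos_diag Om2"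
      "negloglik X B2 Om2 Th = negloglik X B Om Th"
      using reverse_covered[OF less.prems(1) xy(1) cov1 cov2 less.prems(5,6)] unfolding G2_def by blast
    have "(x,y) \<in> skeleton G'" using less.prems(3) xy(1) unfolding skeleton_def by blast
    hence yx': "(y,x) \<in> G'" using xy(2) unfolding skeleton_def by blast
    have "G2 - G' = (G - G') - {(x,y)}" unfolding G2_def using yx' by blast
    moreover have "card (G - G') > 0" using False by (simp add: card_gt_0_iff)
    ultimately have card: "card (G2 - G') < card (G - G')" using xy by simp
    have ac2: "acyclic G2" unfolding G2_def by (rule reversal_acyclic[OF less.prems(1) xy(1) cov2])
    have eq2: "skeleton G2 = skeleton G'" "v_structures G2 = v_structures G'"
      unfolding G2_def using reversal_equiv[OF less.prems(1) xy(1) cov1 cov2] less.prems(3,4) by auto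
    obtain B' Om' where "(\<forall>k j. (k,j) \<notin> G' \<longrightarrow> B'$k$j = 0)" "pos_diag Om'"
      "negloglik X B' Om' Th = negloglik X B2 Om2 Th"
      using less.hyps[OF card ac2 less.prems(2) eq2 B2(1,2)] by blast
    then show ?thesis using B2(3) by metis
  qed
qed

lemma feas_parts:
  "feasible A G B Om Th \<Longrightarrow> (\<forall>k j. (k,j) \<notin> G \<longrightarrow> B$k$j = 0) \<and> pos_diag Om"
  unfolding feasible_def by auto

lemma feas_swap:
  "feasible A G B Om Th \<Longrightarrow> (\<forall>k j. (k,j) \<notin> G' \<longrightarrow> B'$k$j = 0) \<Longrightarrow> pos_diag Om' \<Longrightarrow> feasible A G' B' Om' Th"
  unfolding feasible_def by auto

lemma one_dir:
  fixes X :: "real^'p^'n" and A :: "real^'n^'n"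
    and G1 G2 :: "('p \<times> 'p) set"
    and B1 Om1 B2 Om2 :: "real^'p^'p" and Th1 Th2 :: "real^'n^'n"
  assumes ac: "acyclic G1" "acyclic G2" and eq: "skeleton G1 = skeleton G2" "v_structures G1 = v_structures G2"
    and f1: "feasible A G1 B1 Om1 Th1" and m2: "is_mle X A G2 B2 Om2 Th2"
  shows "negloglik X B2 Om2 Th2 \<le> negloglik X B1 Om1 Th1"
proof -
  have p: "\<forall>k j. (k,j) \<notin> G1 \<longrightarrow> B1$k$j = 0" "pos_diag Om1" using feas_parts[OF f1] by auto
  obtain B' Om' where a: "\<forall>k j. (k,j) \<notin> G2 \<longrightarrow> B'$k$j = 0" "pos_diag Om'"
    "negloglik X B' Om' Th1 = negloglik X B1 Om1 Th1"
    using transfer[OF ac eq p, of X Th1] by blast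
  have "feasible A G2 B' Om' Th1" by (rule feas_swap[OF f1 a(1,2)])
  hence "negloglik X B2 Om2 Th2 \<le> negloglik X B' Om' Th1" using m2 unfolding is_mle_def by blast
  thus ?thesis using a(3) by simp
qed

theorem theorem1:
  fixes X :: "real^'p^'n" and A :: "real^'n^'n"
    and G1 G2 :: "('p \<times> 'p) set"
    and B1 Om1 B2 Om2 :: "real^'p^'p" and Th1 Th2 :: "real^'n^'n"
  assumes "transpose A = A" and "\<forall>i j. A$i$j = 0 \<or> A$i$j = 1"
    and "is_dag G1" and "is_dag G2" and "markov_equiv G1 G2"
    and "is_mle X A G1 B1 Om1 Th1" and "is_mle X A G2 B2 Om2 Th2"
  shows "negloglik X B1 Om1 Th1 = negloglik X B2 Om2 Th2"
proof -
  have ac: "acyclic G1" "acyclic G2" using assms(3,4) unfolding is_dag_def by auto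
  have eq: "skeleton G1 = skeleton G2" "v_structures G1 = v_structures G2"
    using assms(5) unfolding markov_equiv_def by auto
  have f1: "feasible A G1 B1 Om1 Th1" using assms(6) unfolding is_mle_def by blast
  have f2: "feasible A G2 B2 Om2 Th2" using assms(7) unfolding is_mle_def by blast
  have "negloglik X B2 Om2 Th2 \<le> negloglik X B1 Om1 Th1" by (rule one_dir[OF ac eq f1 assms(7)])
  moreover have "negloglik X B1 Om1 Th1 \<le> negloglik X B2 Om2 Th2"
    by (rule one_dir[OF ac(2,1) eq[symmetric] f2 assms(6)])
  ultimately show ?thesis by linarith
qed

end
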